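(* Every topological space with the countable chain condition (CCC) is selectively $2$-star-ccc.
   Context: No separation axioms are assumed. A space has the CCC if every pairwise disjoint family of open sets is countable. For $B\subseteq X$ and a family $\mathcal{U}$ of subsets of $X$: $\operatorname{st}^1(B,\mathcal{U})=\bigcup\{U\in\mathcal{U}:U\cap B\neq\emptyset\}$ and $\operatorname{st}^{2}(B,\mathcal{U})=\bigcup\{U\in\mathcal{U}:U\cap\operatorname{st}^1(B,\mathcal{U})\neq\emptyset\}$. A space $X$ is selectively $2$-star-ccc if for every open cover $\mathcal{U}$ of $X$ and every sequence $(\mathcal{A}_n:n\in\omega)$ of maximal pairwise disjoint families of open subsets of $X$, there is a sequence $(A_n\in\mathcal{A}_n:n\in\omega)$ with $\operatorname{st}^2(\bigcup_{n\in\omega}A_n,\mathcal{U})=X$. *)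

theory Defs
  imports "HOL-Analysis.Analysis"
begin

definition ccc :: "'a topology \<Rightarrow> bool" where
  "ccc X \<longleftrightarrow> (\<forall>\<A>. (\<forall>A\<in>\<A>. openin X A) \<and> pairwise disjnt \<A> \<longrightarrow> countable \<A>)"

definition cellular_family :: "'a topology \<Rightarrow> 'a set set \<Rightarrow> bool" where
  "cellular_family X \<A> \<longleftrightarrow> (\<forall>A\<in>\<A>. openin X A \<and> A \<noteq> {}) \<and> pairwise disjnt \<A>"

definition maximal_cellular_family :: "'a topology \<Rightarrow> 'a set set \<Rightarrow> bool" where
  "maximal_cellular_family X \<A> \<longleftrightarrow>
     cellular_family X \<A> \<and> (\<forall>\<B>. cellular_family X \<B> \<and> \<A> \<subseteq> \<B> \<longrightarrow> \<B> = \<A>)"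

definition st1 :: "'a set \<Rightarrow> 'a set set \<Rightarrow> 'a set" where
  "st1 B \<U> = \<Union>{U \<in> \<U>. U \<inter> B \<noteq> {}}"

definition st2 :: "'a set \<Rightarrow> 'a set set \<Rightarrow> 'a set" where
  "st2 B \<U> = \<Union>{U \<in> \<U>. U \<inter> st1 B \<U> \<noteq> {}}"

definition selectively_2_star_ccc :: "'a topology \<Rightarrow> bool" where
  "selectively_2_star_ccc X \<longleftrightarrow>
     (\<forall>\<U> \<A>. (\<forall>U\<in>\<U>. openin X U) \<and> \<Union>\<U> = topspace X
        \<and> (\<forall>n::nat. maximal_cellular_family X (\<A> n))
        \<longrightarrow> (\<exists>A. (\<forall>n. A n \<in> \<A> n) \<and> st2 (\<Union>n. A n) \<U> = topspace X))"

end

theory Submission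
  imports Defs
begin

lemma maximal_dense:
  assumes "maximal_cellular_family X \<A>" "openin X V" "V \<noteq> {}"
  shows "\<exists>A\<in>\<A>. A \<inter> V \<noteq> {}"
proof (rule ccontr)
  assume H: "\<not> ?thesis"
  have c: "cellular_family X \<A>" and m: "\<And>\<B>. cellular_family X \<B> \<Longrightarrow> \<A> \<subseteq> \<B> \<Longrightarrow> \<B> = \<A>"
    using assms(1) unfolding maximal_cellular_family_def by blast+
  have "V \<notin> \<A>" using H assms(3) by blast
  moreover have "cellular_family X (insert V \<A>)"
    using c H assms(2,3) unfolding cellular_family_def pairwise_def disjnt_def
    by (auto simp: Int_commute)
  ultimately show False using m[of "insert V \<A>"] by blast
qed

lemma chain_ok:
  fixes P :: "'a set \<Rightarrow> bool"
  shows "\<forall>C\<in>chains {\<W>. (\<forall>W\<in>\<W>. P W) \<and> pairwise disjnt \<W>}. \<Union>C \<in> {\<W>. (\<forall>W\<in>\<W>. P W) \<and> pairwise disjnt \<W>}"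
proof
  fix C assume C: "C \<in> chains {\<W>. (\<forall>W\<in>\<W>. P W) \<and> pairwise disjnt \<W>}"
  hence sub: "\<And>z. z \<in> C \<Longrightarrow> (\<forall>W\<in>z. P W) \<and> pairwise disjnt z"
    and ch: "\<And>x y. x \<in> C \<Longrightarrow> y \<in> C \<Longrightarrow> x \<subseteq> y \<or> y \<subseteq> x"
    unfolding chains_def chain_subset_def by auto
  have "pairwise disjnt (\<Union>C)"
    unfolding pairwise_def
  proof (intro ballI impI)
    fix a b assume "a \<in> \<Union>C" "b \<in> \<Union>C" "a \<noteq> b"
    then obtain x y where xy: "x \<in> C" "y \<in> C" "a \<in> x" "b \<in> y" by blast
    have "\<exists>z\<in>C. a \<in> z \<and> b \<in> z"
      using ch[OF xy(1,2)] xy by blast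
    then obtain z where z: "z \<in> C" "a \<in> z" "b \<in> z" by blast
    have "pairwise disjnt z" using sub[OF z(1)] by blast
    thus "disjnt a b" using z \<open>a \<noteq> b\<close> by (simp add: pairwiseD)
  qed
  moreover have "\<forall>W\<in>\<Union>C. P W" using sub by blast
  ultimately show "\<Union>C \<in> {\<W>. (\<forall>W\<in>\<W>. P W) \<and> pairwise disjnt \<W>}" by simp
qed

theorem corollary4:
  fixes X :: "'a topology"
  assumes "topspace X \<noteq> {}"
    and "ccc X"
  shows "selectively_2_star_ccc X"
  unfolding selectively_2_star_ccc_def
proof (intro allI impI)
  fix \<U> :: "'a set set" and \<A> :: "nat \<Rightarrow> 'a set set"
  assume H: "(\<forall>U\<in>\<U>. openin X U) \<and> \<Union>\<U> = topspace X \<and> (\<forall>n::nat. maximal_cellular_family X (\<A> n))"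
  hence Uo: "\<And>U. U \<in> \<U> \<Longrightarrow> openin X U" and Ucov: "\<Union>\<U> = topspace X"
    and Am: "\<And>n. maximal_cellular_family X (\<A> n)" by auto
  define F where "F = {\<W>. (\<forall>W\<in>\<W>. openin X W \<and> W \<noteq> {} \<and> (\<exists>U\<in>\<U>. W \<subseteq> U)) \<and> pairwise disjnt \<W>}"
  have "\<forall>C\<in>chains F. \<Union>C \<in> F"
    unfolding F_def by (rule chain_ok)
  then obtain M where MF: "M \<in> F" and Mmax: "\<And>Z. Z \<in> F \<Longrightarrow> M \<subseteq> Z \<Longrightarrow> Z = M"
    using Zorn_Lemma[of F] by blast
  have Mprop: "\<And>W. W \<in> M \<Longrightarrow> openin X W \<and> W \<noteq> {} \<and> (\<exists>U\<in>\<U>. W \<subseteq> U)"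
    and Mdisj: "pairwise disjnt M" using MF unfolding F_def by auto
  have Mcount: "countable M"
  proof -
    have "(\<forall>A\<in>M. openin X A) \<and> pairwise disjnt M" using Mprop Mdisj by blast
    thus ?thesis using assms(2) unfolding ccc_def by blast
  qed
  have Mdense: "\<exists>W\<in>M. W \<inter> U \<noteq> {}" if "U \<in> \<U>" "U \<noteq> {}" for U
  proof (rule ccontr)
    assume N: "\<not> ?thesis"
    have "U \<notin> M" using N that(2) by blast
    moreover have "insert U M \<in> F"
    proof -
      have "\<forall>W\<in>insert U M. openin X W \<and> W \<noteq> {} \<and> (\<exists>U'\<in>\<U>. W \<subseteq> U')"
        using Mprop that Uo by blast
      moreover have "pairwise disjnt (insert U M)"
        unfolding pairwise_insert
      proof (intro conjI allI impI Mdisj)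
        fix y assume "y \<in> M \<and> y \<noteq> U"
        hence "y \<inter> U = {}" using N by blast
        thus "disjnt U y" "disjnt y U" by (auto simp: disjnt_def)
      qed
      ultimately show ?thesis unfolding F_def by blast
    qed
    ultimately show False using Mmax[of "insert U M"] by blast
  qed
  obtain x0 where "x0 \<in> topspace X" using assms(1) by blast
  then obtain U0 where "U0 \<in> \<U>" "x0 \<in> U0" using Ucov by blast
  hence "M \<noteq> {}" using Mdense[of U0] by blast
  define w where "w = from_nat_into M"
  have wM: "\<And>k. w k \<in> M" using \<open>M \<noteq> {}\<close> from_nat_into unfolding w_def by blast
  have rw: "range w = M" using \<open>M \<noteq> {}\<close> Mcount unfolding w_def by simp
  have "\<forall>k. \<exists>U. U \<in> \<U> \<and> w k \<subseteq> U" using wM Mprop by blast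
  then obtain u where u: "\<And>k. u k \<in> \<U> \<and> w k \<subseteq> u k" by metis
  have "\<forall>k. \<exists>A. A \<in> \<A> k \<and> A \<inter> w k \<noteq> {}"
  proof
    fix k
    have "openin X (w k)" "w k \<noteq> {}" using Mprop[OF wM[of k]] by auto
    from maximal_dense[OF Am[of k] this]
    show "\<exists>A. A \<in> \<A> k \<and> A \<inter> w k \<noteq> {}" by blast
  qed
  then obtain A where A: "\<And>k. A k \<in> \<A> k \<and> A k \<inter> w k \<noteq> {}" by metis
  show "\<exists>A. (\<forall>n. A n \<in> \<A> n) \<and> st2 (\<Union>n. A n) \<U> = topspace X"
  proof (intro exI conjI allI)
    show "A n \<in> \<A> n" for n using A by blast
    show "st2 (\<Union>n. A n) \<U> = topspace X"
    proof
      show "st2 (\<Union>n. A n) \<U> \<subseteq> topspace X" using Ucov unfolding st2_def by auto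
      show "topspace X \<subseteq> st2 (\<Union>n. A n) \<U>"
      proof
        fix x assume "x \<in> topspace X"
        then obtain U where U: "U \<in> \<U>" "x \<in> U" using Ucov by blast
        then obtain W where "W \<in> M" "W \<inter> U \<noteq> {}" using Mdense by blast
        then obtain k where k: "w k \<inter> U \<noteq> {}" using rw by blast
        have "u k \<inter> (\<Union>n. A n) \<noteq> {}" using u[of k] A[of k] by blast
        hence "u k \<subseteq> st1 (\<Union>n. A n) \<U>" using u[of k] unfolding st1_def by blast
        hence "U \<inter> st1 (\<Union>n. A n) \<U> \<noteq> {}" using u[of k] k by blast
        thus "x \<in> st2 (\<Union>n. A n) \<U>" using U unfolding st2_def by blast
      qed
    qed
  qed
qed

end
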